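(* For every pacing function $\mu:\Theta\to\mathbb{R}_{\ge0}$, buyer type $(w,B)\in\Theta$ and $t\ge0$, the bidding function $b^*(\alpha):=\sigma^\mu_\alpha\big(w^T\alpha/(1+t)\big)$ is an optimal solution of $\max_{b:A\to\mathbb{R}_{\ge0}}\ \mathbb{E}_{\alpha,\{\theta_i\}_{i=1}^{n-1}}\Big[\Big(\frac{w^T\alpha}{1+t}-b(\alpha)\Big)\mathbf 1\{b(\alpha)\ge\max(r(\alpha),\{\beta^\mu(\theta_i,\alpha)\}_i)\}\Big]$, where $\alpha\sim F$, $\theta_1,\dots,\theta_{n-1}\sim G$ are i.i.d. and independent of $\alpha$, and the maximum is over measurable $b$.
   Context: Setting. Fix integers $n\ge 2$ and $d\ge 2$, and constants $U>0$, $B_{\min}>0$. Buyer types are $\theta=(w,B)\in\Theta:=(0,U)^d\times(B_{\min},U)$; $\Theta_w:=(0,U)^d$. Item types are $\alpha\in A\subset\mathbb{R}^d_{+}$ (strictly positive orthant); all sets carry the Lebesgue $\sigma$-algebra. $F$ is a probability distribution on $A$ with a density and $G$ a probability distribution on $\Theta$ with a density. Buyer $(w,B)$ values item $\alpha$ at $w^T\alpha$; $\omega>0$ is a constant with $w^T\alpha\le\omega$ for all $w\in\Theta_w,\alpha\in A$. Reserve prices: measurable $r:A\to(0,\infty)$. A pacing function is a measurable $\mu:\Theta\to\mathbb{R}_{\ge0}$. For $\alpha\in A$, $\lambda^\mu_\alpha$ is the distribution of $w^T\alpha/(1+\mu(w,B))$ when $(w,B)\sim G$, and $H^\mu_\alpha$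 the distribution of the maximum of $n-1$ i.i.d. draws from $\lambda^\mu_\alpha$; $H^\mu_\alpha(x):=\lambda^\mu_\alpha((-\infty,x])^{n-1}$. Define $\sigma^\mu_\alpha(x)=x$ if $x<r(\alpha)$; for $x\ge r(\alpha)$, $\sigma^\mu_\alpha(x)=x-\int_{r(\alpha)}^x \frac{H^\mu_\alpha(s)}{H^\mu_\alpha(x)}ds$ if $H^\mu_\alpha(x)>0$ and $\sigma^\mu_\alpha(x)=r(\alpha)$ if $H^\mu_\alpha(x)=0$. The value-pacing-based strategy is $\beta^\mu(w,B,\alpha):=\sigma^\mu_\alpha\big(w^T\alpha/(1+\mu(w,B))\big)$. *)

theory Defs
  imports "HOL-Probability.Probability"
begin

text \<open>Buyer types theta = (w, B) :: (real^'d) \<times> real; item types alpha :: real^'d.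
  Valuation w^T alpha is the inner product  fst theta \<bullet> alpha.\<close>

definition Theta :: "real \<Rightarrow> real \<Rightarrow> ((real^'d) \<times> real) set" where
  "Theta U Bmin = {(w, B). (\<forall>i. 0 < w $ i \<and> w $ i < U) \<and> Bmin < B \<and> B < U}"

definition Theta_w :: "real \<Rightarrow> (real^'d) set" where
  "Theta_w U = {w. \<forall>i. 0 < w $ i \<and> w $ i < U}"

definition lam :: "((real^'d) \<times> real) measure \<Rightarrow> ((real^'d) \<times> real \<Rightarrow> real) \<Rightarrow> real^'d \<Rightarrow> real measure" where
  "lam G \<mu> \<alpha> = distr G borel (\<lambda>\<theta>. (fst \<theta> \<bullet> \<alpha>) / (1 + \<mu> \<theta>))"

definition Hfun :: "nat \<Rightarrow> ((real^'d) \<times> real) measure \<Rightarrow> ((real^'d) \<times> real \<Rightarrow> real) \<Rightarrow> real^'d \<Rightarrow> real \<Rightarrow> real" where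
  "Hfun n G \<mu> \<alpha> x = (measure (lam G \<mu> \<alpha>) {..x}) ^ (n - 1)"

definition sigma_fun :: "nat \<Rightarrow> ((real^'d) \<times> real) measure \<Rightarrow> (real^'d \<Rightarrow> real) \<Rightarrow> ((real^'d) \<times> real \<Rightarrow> real)
    \<Rightarrow> real^'d \<Rightarrow> real \<Rightarrow> real" where
  "sigma_fun n G r \<mu> \<alpha> x =
     (if x < r \<alpha> then x
      else if Hfun n G \<mu> \<alpha> x > 0
        then x - integral {r \<alpha>..x} (\<lambda>s. Hfun n G \<mu> \<alpha> s / Hfun n G \<mu> \<alpha> x)
        else r \<alpha>)"

definition beta_fun :: "nat \<Rightarrow> ((real^'d) \<times> real) measure \<Rightarrow> (real^'d \<Rightarrow> real) \<Rightarrow> ((real^'d) \<times> real \<Rightarrow> real)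
    \<Rightarrow> (real^'d) \<times> real \<Rightarrow> real^'d \<Rightarrow> real" where
  "beta_fun n G r \<mu> \<theta> \<alpha> = sigma_fun n G r \<mu> \<alpha> ((fst \<theta> \<bullet> \<alpha>) / (1 + \<mu> \<theta>))"

definition payoff :: "nat \<Rightarrow> ((real^'d) \<times> real) measure \<Rightarrow> (real^'d \<Rightarrow> real) \<Rightarrow> ((real^'d) \<times> real \<Rightarrow> real)
    \<Rightarrow> (real^'d \<Rightarrow> real) \<Rightarrow> (real^'d \<Rightarrow> real) \<Rightarrow> (real^'d) \<times> (nat \<Rightarrow> (real^'d) \<times> real) \<Rightarrow> real" where
  "payoff n G r \<mu> v b z =
     (let \<alpha> = fst z; \<theta>s = snd z in
       (v \<alpha> - b \<alpha>) *
       (if r \<alpha> \<le> b \<alpha> \<and> (\<forall>i<n - 1. beta_fun n G r \<mu> (\<theta>s i) \<alpha> \<le> b \<alpha>) then 1 else 0))"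

text \<open>Expectation of a real random variable as an extended real (positive part minus
  negative part); it is well defined whenever one of the two parts is finite.\<close>
definition ext_expect :: "'a measure \<Rightarrow> ('a \<Rightarrow> real) \<Rightarrow> ereal" where
  "ext_expect M f = enn2ereal (\<integral>\<^sup>+ x. ennreal (f x) \<partial>M) - enn2ereal (\<integral>\<^sup>+ x. ennreal (- f x) \<partial>M)"

end

theory Submission
  imports Defs
begin



definition sg :: "(real \<Rightarrow> real) \<Rightarrow> real \<Rightarrow> real \<Rightarrow> real" where
  "sg H r x = (if x < r then x else if H x > 0 then x - integral {r..x} H / H x else r)"

lemma mono_integrable: "mono (H::real\<Rightarrow>real) \<Longrightarrow> H integrable_on {a..b}"
  by (rule integrable_on_mono_on) (simp add: mono_on_def monoD)

lemma J_diff: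
  fixes H :: "real \<Rightarrow> real"
  assumes m: "mono H" and ry: "r \<le> y" and rv: "r \<le> v"
  shows "integral {r..v} H - integral {r..y} H \<ge> (v - y) * H y"
proof (cases "y \<le> v")
  case True
  have "integral {r..y} H + integral {y..v} H = integral {r..v} H"
    by (rule Henstock_Kurzweil_Integration.integral_combine[OF ry True mono_integrable[OF m]])
  moreover have "integral {y..v} (\<lambda>_. H y) \<le> integral {y..v} H"
    by (rule integral_le) (auto intro: mono_integrable[OF m] monoD[OF m])
  moreover have "integral {y..v} (\<lambda>_. H y) = (v - y) * H y" using True by simp
  ultimately show ?thesis by linarith
next
  case False
  have "integral {r..v} H + integral {v..y} H = integral {r..y} H"
    by (rule Henstock_Kurzweil_Integration.integral_combine[OF rv _ mono_integrable[OF m]]) (use False in auto)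
  moreover have "integral {v..y} H \<le> integral {v..y} (\<lambda>_. H y)"
    by (rule integral_le) (auto intro: mono_integrable[OF m] monoD[OF m])
  moreover have "integral {v..y} (\<lambda>_. H y) = (y - v) * H y" using False by simp
  ultimately show ?thesis by (simp add: algebra_simps)
qed

lemma J_bounds:
  fixes H :: "real \<Rightarrow> real"
  assumes m: "mono H" and nn: "\<And>x. H x \<ge> 0" and rx: "r \<le> x"
  shows "integral {r..x} H \<ge> 0" "integral {r..x} H \<le> (x - r) * H x"
proof -
  show "integral {r..x} H \<ge> 0"
    by (rule integral_nonneg) (auto intro: mono_integrable[OF m] nn)
  have "integral {r..r} H - integral {r..x} H \<ge> (r - x) * H x"
    by (rule J_diff[OF m rx]) simp
  then show "integral {r..x} H \<le> (x - r) * H x" by (simp add: algebra_simps)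
qed

lemma sg_ge:
  fixes H :: "real \<Rightarrow> real"
  assumes m: "mono H" and nn: "\<And>x. H x \<ge> 0" and rx: "r \<le> x"
  shows "r \<le> sg H r x" "sg H r x \<le> x"
proof -
  note J = J_bounds[OF m nn rx]
  show "r \<le> sg H r x"
  proof (cases "H x > 0")
    case True
    have "integral {r..x} H / H x \<le> x - r" using J(2) True by (simp add: divide_le_eq mult.commute)
    then show ?thesis using True rx by (simp add: sg_def)
  qed (use rx in \<open>auto simp: sg_def\<close>)
  show "sg H r x \<le> x"
    using J(1) rx nn[of x] by (auto simp: sg_def)
qed

lemma sg_mono:
  fixes H :: "real \<Rightarrow> real"
  assumes m: "mono H" and nn: "\<And>x. H x \<ge> 0" and le: "x1 \<le> x2"
  shows "sg H r x1 \<le> sg H r x2"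
proof (cases "x1 < r")
  case True
  then show ?thesis
    using sg_ge[OF m nn, of r x2] le by (cases "x2 < r") (auto simp: sg_def)
next
  case False
  then have r1: "r \<le> x1" by simp
  then have r2: "r \<le> x2" using le by simp
  show ?thesis
  proof (cases "H x1 > 0")
    case False
    then have "sg H r x1 = r" using r1 by (simp add: sg_def)
    then show ?thesis using sg_ge(1)[OF m nn r2] by simp
  next
    case True
    define h1 where "h1 = H x1"
    define h2 where "h2 = H x2"
    have h12: "h1 \<le> h2" unfolding h1_def h2_def using monoD[OF m le] .
    have h2p: "h2 > 0" using True h12 h1_def by simp
    define J1 where "J1 = integral {r..x1} H"
    define J2 where "J2 = integral {r..x2} H"
    have "J1 - J2 \<ge> (x1 - x2) * h2" using J_diff[OF m r2 r1] unfolding J1_def J2_def h2_def .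
    hence "J2 \<le> J1 + (x2 - x1) * h2" by (simp add: algebra_simps)
    hence a: "J2 / h2 \<le> J1 / h2 + (x2 - x1)" using h2p by (simp add: divide_simps algebra_simps)
    have J1n: "J1 \<ge> 0" unfolding J1_def using J_bounds(1)[OF m nn r1] .
    have "J1 / h2 \<le> J1 / h1" using True h12 J1n h1_def by (simp add: frac_le)
    hence "x1 - J1 / h1 \<le> x2 - J2 / h2" using a by linarith
    then show ?thesis using True h2p r1 r2 le
      by (simp add: sg_def h1_def h2_def J1_def J2_def not_less)
  qed
qed

lemma per_y:
  fixes H :: "real \<Rightarrow> real"
  assumes m: "mono H" and nn: "\<And>x. H x \<ge> 0" and ry: "r \<le> y" and sy: "sg H r y \<le> b"
    and bv: "b < v" and rv: "r \<le> v"
  shows "(v - b) * H y \<le> integral {r..v} H"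
proof (cases "H y > 0")
  case False
  then have "H y = 0" using nn[of y] by simp
  then show ?thesis using J_bounds(1)[OF m nn rv] by simp
next
  case True
  have "(v - b) * H y \<le> (v - sg H r y) * H y"
    using sy True by (intro mult_right_mono) auto
  also have "\<dots> = (v - y) * H y + integral {r..y} H"
    using True ry by (simp add: sg_def algebra_simps)
  also have "\<dots> \<le> integral {r..v} H" using J_diff[OF m ry rv] by simp
  finally show ?thesis .
qed




lemma downset_seq:
  fixes S :: "real set"
  assumes ne: "S \<noteq> {}" and down: "\<And>x y. y \<in> S \<Longrightarrow> x \<le> y \<Longrightarrow> x \<in> S"
  obtains Y :: "nat \<Rightarrow> real" where "\<And>i. Y i \<in> S" "incseq Y" "(\<Union>i. {..Y i}) = S"
proof (cases "bdd_above S")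
  case False
  have inS: "real i \<in> S" for i
  proof -
    obtain z where "z \<in> S" "z > real i" using False by (meson bdd_above_def linorder_not_le)
    then show ?thesis using down by auto
  qed
  have "(\<Union>i. {..real i}) = S"
  proof
    show "S \<subseteq> (\<Union>i. {..real i})"
    proof
      fix x assume "x \<in> S"
      obtain i where "x \<le> real i" using real_arch_simple by blast
      then show "x \<in> (\<Union>i. {..real i})" by auto
    qed
  qed (use inS down in auto)
  then show ?thesis using that[of "\<lambda>i. real i"] inS by (auto simp: incseq_def)
next
  case bdd: True
  show ?thesis
  proof (cases "Sup S \<in> S")
    case True
    have "(\<Union>i::nat. {..Sup S}) = S" using True down cSup_upper[OF _ bdd] by auto
    then show ?thesis using that[of "\<lambda>_. Sup S"] True by (auto simp: incseq_def)
  next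
    case False
    define Y where "Y i = Sup S - 1 / (real i + 1)" for i :: nat
    have inS: "Y i \<in> S" for i
    proof -
      have "Y i < Sup S" unfolding Y_def by simp
      then obtain z where "z \<in> S" "Y i < z" using less_cSup_iff[OF ne bdd] by blast
      then show ?thesis using down by auto
    qed
    have inc: "incseq Y" unfolding incseq_def Y_def
      by (auto intro!: divide_left_mono mult_pos_pos simp: field_simps)
    have "(\<Union>i. {..Y i}) = S"
    proof
      show "S \<subseteq> (\<Union>i. {..Y i})"
      proof
        fix x assume x: "x \<in> S"
        have "x \<le> Sup S" using cSup_upper[OF x bdd] .
        then have "x < Sup S" using False x by (metis order.order_iff_strict)
        then obtain i :: nat where "1 / (real i + 1) < Sup S - x"
          by (metis diff_gt_0_iff_gt nat_approx_posE of_nat_Suc add.commute)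
        then have "x \<le> Y i" unfolding Y_def by simp
        then show "x \<in> (\<Union>i. {..Y i})" by auto
      qed
    qed (use inS down in auto)
    then show ?thesis using that[of Y] inS inc by auto
  qed
qed

lemma downset_bound:
  fixes L :: "real measure" and \<phi> :: "real \<Rightarrow> real"
  assumes fin: "finite_measure L" and sL: "sets L = sets borel"
    and ne: "S \<noteq> {}" and down: "\<And>x y. y \<in> S \<Longrightarrow> x \<le> y \<Longrightarrow> x \<in> S"
    and cont: "continuous_on UNIV \<phi>"
    and bnd: "\<And>y. y \<in> S \<Longrightarrow> \<phi> (measure L {..y}) \<le> c"
  shows "\<phi> (measure L S) \<le> c"
proof -
  interpret finite_measure L by fact
  obtain Y where Y: "\<And>i. Y i \<in> S" "incseq Y" "(\<Union>i. {..Y i}) = S"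
    using downset_seq[of S, OF ne] down by blast
  have "(\<lambda>i. measure L {..Y i}) \<longlonglongrightarrow> measure L (\<Union>i. {..Y i})"
    by (rule finite_Lim_measure_incseq) (use sL Y(2) in \<open>auto simp: incseq_def monoD\<close>)
  then have lim: "(\<lambda>i. measure L {..Y i}) \<longlonglongrightarrow> measure L S" using Y(3) by simp
  have "(\<lambda>i. \<phi> (measure L {..Y i})) \<longlonglongrightarrow> \<phi> (measure L S)"
    using continuous_on_tendsto_compose[OF cont lim] by simp
  then show ?thesis by (rule LIMSEQ_le_const2) (use bnd Y(1) in auto)
qed




lemma per_alpha:
  fixes L :: "real measure" and k :: nat
  assumes P: "prob_space L" and sL: "sets L = sets borel"
    and Hdef: "H = (\<lambda>x. measure L {..x} ^ k)"
  shows "(v - b) * (if r \<le> b then 1 else 0) * measure L {x. sg H r x \<le> b} ^ k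
     \<le> (v - sg H r v) * (if r \<le> sg H r v then 1 else 0) * measure L {x. sg H r x \<le> sg H r v} ^ k"
proof -
  interpret prob_space L by fact
  have m: "mono H" unfolding Hdef
    by (intro monoI power_mono finite_measure_mono) (auto simp: sL)
  have nn: "\<And>x. H x \<ge> 0" unfolding Hdef by simp
  have Hv: "\<And>y. H y = measure L {..y} ^ k" by (simp add: Hdef)
  have smono: "mono (sg H r)" using sg_mono[OF m nn] by (auto intro: monoI)
  have smeas: "sg H r \<in> borel_measurable borel" by (rule borel_measurable_mono[OF smono])
  have setm: "{x. sg H r x \<le> c} \<in> sets L" for c
    using smeas unfolding sL by measurable
  define J where "J = integral {r..v} H"
  show ?thesis
  proof (cases "v < r")
    case True
    then have "sg H r v = v" by (simp add: sg_def)
    with True show ?thesis by (auto intro!: mult_nonpos_nonneg)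
  next
    case False
    then have rv: "r \<le> v" by simp
    note sb = sg_ge[OF m nn rv]
    have Jn: "J \<ge> 0" "J \<le> (v - r) * H v" using J_bounds[OF m nn rv] unfolding J_def by auto
    have RHS: "J \<le> (v - sg H r v) * (if r \<le> sg H r v then 1 else 0) * measure L {x. sg H r x \<le> sg H r v} ^ k"
    proof -
      have sub: "measure L {..v} \<le> measure L {x. sg H r x \<le> sg H r v}"
        by (rule finite_measure_mono) (auto intro: monoD[OF smono] setm)
      have "(v - sg H r v) * H v \<le> (v - sg H r v) * measure L {x. sg H r x \<le> sg H r v} ^ k"
      proof (rule mult_left_mono)
        show "H v \<le> measure L {x. sg H r x \<le> sg H r v} ^ k"
          using Hv[of v] sub by (simp add: power_mono)
      qed (use sb in auto)
      moreover have "J \<le> (v - sg H r v) * H v"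
      proof (cases "H v > 0")
        case True then show ?thesis using rv by (simp add: sg_def J_def)
      next
        case False then have "H v = 0" using nn[of v] by simp
        then show ?thesis using Jn by simp
      qed
      ultimately show ?thesis using sb by simp
    qed
    have LHS: "(v - b) * (if r \<le> b then 1 else 0) * measure L {x. sg H r x \<le> b} ^ k \<le> J"
    proof (cases "r \<le> b \<and> b < v")
      case False
      then show ?thesis using Jn
        by (auto intro!: order.trans[OF mult_nonpos_nonneg[of "v - b" "prob {x. sg H r x \<le> b} ^ k"]])
    next
      case True
      define S where "S = {x. sg H r x \<le> b}"
      have rS: "r \<in> S" using True by (simp add: S_def sg_def)
      have "(\<lambda>t. (v - b) * t ^ k) (measure L S) \<le> J"
      proof (rule downset_bound[of L S])
        show "finite_measure L" by (rule finite_measure_axioms)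
        show "sets L = sets borel" by fact
        show "S \<noteq> {}" using rS by auto
        show "x \<in> S" if "y \<in> S" "x \<le> y" for x y
          using that monoD[OF smono, of x y] by (auto simp: S_def)
        show "continuous_on UNIV (\<lambda>t. (v - b) * t ^ k)" by (intro continuous_intros)
        fix y assume y: "y \<in> S"
        define y' where "y' = max y r"
        have y'S: "sg H r y' \<le> b" using y rS by (simp add: S_def y'_def max_def)
        have "measure L {..y} \<le> measure L {..y'}"
          by (rule finite_measure_mono) (auto simp: sL y'_def)
        then have "(v - b) * measure L {..y} ^ k \<le> (v - b) * H y'"
          using True Hv[of y'] by (intro mult_left_mono) (auto simp: power_mono)
        also have "\<dots> \<le> J" unfolding J_def
          by (rule per_y[OF m nn _ y'S]) (use True rv in \<open>auto simp: y'_def\<close>)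
        finally show "(v - b) * measure L {..y} ^ k \<le> J" .
      qed
      then show ?thesis using True by (simp add: S_def)
    qed
    from LHS RHS show ?thesis by linarith
  qed
qed




definition Xf :: "((real^'d) \<times> real \<Rightarrow> real) \<Rightarrow> (real^'d) \<times> real \<Rightarrow> real^'d \<Rightarrow> real" where
  "Xf \<mu> \<theta> \<alpha> = (fst \<theta> \<bullet> \<alpha>) / (1 + \<mu> \<theta>)"

lemma idm: "(\<lambda>x::'a::euclidean_space. x) \<in> lebesgue \<rightarrow>\<^sub>M borel"
  using id_borel_measurable_lebesgue by (simp add: id_def)

lemma Xf_meas:
  assumes \<mu>m: "\<mu> \<in> borel_measurable lebesgue"
    and f1: "f1 \<in> M \<rightarrow>\<^sub>M lebesgue" and f2: "f2 \<in> M \<rightarrow>\<^sub>M lebesgue"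
  shows "(\<lambda>q. Xf \<mu> (f1 q) (f2 q)) \<in> borel_measurable M"
proof -
  have f1b: "f1 \<in> borel_measurable M" by (rule measurable_compose[OF f1 idm])
  have fstb: "(fst :: (real^'d) \<times> real \<Rightarrow> real^'d) \<in> borel_measurable borel"
    by (rule borel_measurable_continuous_onI) (intro continuous_intros)
  have [measurable]: "(\<lambda>q. fst (f1 q)) \<in> borel_measurable M"
    using measurable_compose[OF f1b fstb] by (simp add: comp_def)
  have [measurable]: "f2 \<in> borel_measurable M" by (rule measurable_compose[OF f2 idm])
  have [measurable]: "(\<lambda>q. \<mu> (f1 q)) \<in> borel_measurable M" by (rule measurable_compose[OF f1 \<mu>m])
  show ?thesis unfolding Xf_def by measurable
qed

locale sett =
  fixes G :: "((real^'d) \<times> real) measure" and \<mu> :: "(real^'d) \<times> real \<Rightarrow> real"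
    and r :: "real^'d \<Rightarrow> real" and n :: nat
  assumes P: "prob_space G" and sG: "sets G = sets lebesgue"
    and \<mu>m: "\<mu> \<in> borel_measurable lebesgue" and rm: "r \<in> borel_measurable lebesgue"
begin

interpretation G: prob_space G by (rule P)

lemma spG: "space G = UNIV"
  using sets_eq_imp_space_eq[OF sG] by simp

lemma Xf_meas_alpha: "(\<lambda>\<theta>. Xf \<mu> \<theta> \<alpha>) \<in> borel_measurable G"
proof -
  have "(\<lambda>\<theta>. Xf \<mu> \<theta> \<alpha>) \<in> borel_measurable lebesgue"
    by (rule Xf_meas[OF \<mu>m]) auto
  then show ?thesis using measurable_cong_sets[OF sG refl] by blast
qed

lemma lam_cdf: "measure (lam G \<mu> \<alpha>) {..x} = measure G {\<theta>. Xf \<mu> \<theta> \<alpha> \<le> x}"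
  unfolding lam_def Xf_def[symmetric]
  by (subst measure_distr[OF Xf_meas_alpha]) (auto simp: spG vimage_def)

lemma prob_lam: "prob_space (lam G \<mu> \<alpha>)"
  unfolding lam_def Xf_def[symmetric]
  by (rule G.prob_space_distr[OF Xf_meas_alpha])

lemma sets_lam: "sets (lam G \<mu> \<alpha>) = sets borel"
  unfolding lam_def by simp

lemma Hfun_eq: "Hfun n G \<mu> \<alpha> x = measure G {\<theta>. Xf \<mu> \<theta> \<alpha> \<le> x} ^ (n - 1)"
  unfolding Hfun_def lam_cdf ..

lemma sigma_eq: "sigma_fun n G r \<mu> \<alpha> x = sg (Hfun n G \<mu> \<alpha>) (r \<alpha>) x"
  unfolding sigma_fun_def sg_def by simp

lemma H_meas: "(\<lambda>p. Hfun n G \<mu> (fst p) (snd p)) \<in> borel_measurable (lebesgue \<Otimes>\<^sub>M borel)"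
proof -
  let ?N = "lebesgue \<Otimes>\<^sub>M (borel :: real measure)"
  have [measurable]: "(\<lambda>q. Xf \<mu> (snd q) (fst (fst q))) \<in> borel_measurable (?N \<Otimes>\<^sub>M G)"
    by (rule Xf_meas[OF \<mu>m]) (auto simp: measurable_cong_sets[OF refl sG, symmetric])
  have Q: "{q \<in> space (?N \<Otimes>\<^sub>M G). Xf \<mu> (snd q) (fst (fst q)) \<le> snd (fst q)} \<in> sets (?N \<Otimes>\<^sub>M G)"
    by measurable
  have "(\<lambda>p. emeasure G (Pair p -` {q \<in> space (?N \<Otimes>\<^sub>M G). Xf \<mu> (snd q) (fst (fst q)) \<le> snd (fst q)}))
      \<in> borel_measurable ?N"
    by (rule G.measurable_emeasure_Pair[OF Q])
  moreover have "Pair p -` {q \<in> space (?N \<Otimes>\<^sub>M G). Xf \<mu> (snd q) (fst (fst q)) \<le> snd (fst q)}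
      = {\<theta>. Xf \<mu> \<theta> (fst p) \<le> snd p}" for p
    by (auto simp: space_pair_measure spG)
  ultimately have "(\<lambda>p. emeasure G {\<theta>. Xf \<mu> \<theta> (fst p) \<le> snd p}) \<in> borel_measurable ?N" by simp
  then have "(\<lambda>p. enn2real (emeasure G {\<theta>. Xf \<mu> \<theta> (fst p) \<le> snd p}) ^ (n - 1)) \<in> borel_measurable ?N"
    by measurable
  then show ?thesis unfolding Hfun_eq measure_def .
qed

end



context sett begin

interpretation G: prob_space G by (rule P)

lemma setX: "{\<theta>. Xf \<mu> \<theta> \<alpha> \<le> y} \<in> sets G"
proof -
  have [measurable]: "(\<lambda>\<theta>. Xf \<mu> \<theta> \<alpha>) \<in> borel_measurable G" by (rule Xf_meas_alpha)
  have "{\<theta> \<in> space G. Xf \<mu> \<theta> \<alpha> \<le> y} \<in> sets G" by measurable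
  then show ?thesis by (simp add: spG)
qed

lemma H_mono: "mono (Hfun n G \<mu> \<alpha>)"
  unfolding Hfun_eq[abs_def]
  by (intro monoI power_mono G.finite_measure_mono) (auto intro: setX)

lemma H_nn: "0 \<le> Hfun n G \<mu> \<alpha> x" and H_le1: "Hfun n G \<mu> \<alpha> x \<le> 1"
  unfolding Hfun_eq by (auto intro: power_le_one)

lemma H_borel: "Hfun n G \<mu> \<alpha> \<in> borel_measurable borel"
  by (rule borel_measurable_mono[OF H_mono])

lemma I_eq: "integral {a..b} (Hfun n G \<mu> \<alpha>) = (\<integral>s. indicator {a..b} s * Hfun n G \<mu> \<alpha> s \<partial>lborel)"
proof -
  have "set_integrable lborel {a..b} (Hfun n G \<mu> \<alpha>)"
    unfolding set_integrable_def
  proof (rule integrableI_bounded_set[where A="{a..b}" and B=1])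
    show "(\<lambda>x. indicator {a..b} x *\<^sub>R Hfun n G \<mu> \<alpha> x) \<in> borel_measurable lborel"
      using H_borel by measurable
  qed (auto simp: H_nn H_le1 emeasure_lborel_Icc_eq)
  from set_borel_integral_eq_integral(2)[OF this] show ?thesis
    by (simp add: set_lebesgue_integral_def)
qed

lemma I_meas: "(\<lambda>p. integral {r (fst p)..snd p} (Hfun n G \<mu> (fst p))) \<in> borel_measurable (lebesgue \<Otimes>\<^sub>M borel)"
proof -
  let ?N = "lebesgue \<Otimes>\<^sub>M (borel :: real measure)"
  interpret L: sigma_finite_measure "lborel :: real measure" by (rule sigma_finite_lborel)
  have Hm: "(\<lambda>q. Hfun n G \<mu> (fst (fst q)) (snd q)) \<in> borel_measurable (?N \<Otimes>\<^sub>M borel)"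
  proof -
    have "(\<lambda>q. (fst (fst q), snd q)) \<in> (?N \<Otimes>\<^sub>M borel) \<rightarrow>\<^sub>M ?N"
      by measurable
    from measurable_compose[OF this H_meas] show ?thesis by simp
  qed
  have [measurable]: "r \<in> borel_measurable lebesgue" by (rule rm)
  note Hm[measurable]
  have "(\<lambda>q. if r (fst (fst q)) \<le> snd q \<and> snd q \<le> snd (fst q) then Hfun n G \<mu> (fst (fst q)) (snd q) else 0)
      \<in> borel_measurable (?N \<Otimes>\<^sub>M borel)"
    by measurable
  then have "(\<lambda>q. indicator {r (fst (fst q))..snd (fst q)} (snd q) * Hfun n G \<mu> (fst (fst q)) (snd q))
      \<in> borel_measurable (?N \<Otimes>\<^sub>M borel)"
    by (rule measurable_cong[THEN iffD1, rotated]) (auto simp: indicator_def)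
  then have "(\<lambda>q. indicator {r (fst (fst q))..snd (fst q)} (snd q) * Hfun n G \<mu> (fst (fst q)) (snd q))
      \<in> borel_measurable (?N \<Otimes>\<^sub>M lborel)"
    by (simp add: measurable_cong_sets[OF sets_pair_measure_cong[OF refl sets_lborel] refl])
  then have "(\<lambda>p. \<integral>s. indicator {r (fst p)..snd p} s * Hfun n G \<mu> (fst p) s \<partial>lborel) \<in> borel_measurable ?N"
    by (intro sigma_finite_measure.borel_measurable_lebesgue_integral[OF sigma_finite_lborel]) (simp add: split_beta')
  then show ?thesis by (simp add: I_eq)
qed

lemma sigma_meas: "(\<lambda>p. sigma_fun n G r \<mu> (fst p) (snd p)) \<in> borel_measurable (lebesgue \<Otimes>\<^sub>M borel)"
proof -
  have [measurable]: "r \<in> borel_measurable lebesgue" by (rule rm)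
  have [measurable]: "(\<lambda>p. Hfun n G \<mu> (fst p) (snd p)) \<in> borel_measurable (lebesgue \<Otimes>\<^sub>M borel)"
    by (rule H_meas)
  have [measurable]: "(\<lambda>p. integral {r (fst p)..snd p} (Hfun n G \<mu> (fst p))) \<in> borel_measurable (lebesgue \<Otimes>\<^sub>M borel)"
    by (rule I_meas)
  show ?thesis unfolding sigma_eq sg_def by measurable
qed

lemma sigma_comp_meas:
  assumes a: "a \<in> M \<rightarrow>\<^sub>M lebesgue" and x: "x \<in> borel_measurable M"
  shows "(\<lambda>q. sigma_fun n G r \<mu> (a q) (x q)) \<in> borel_measurable M"
proof -
  have "(\<lambda>q. (a q, x q)) \<in> M \<rightarrow>\<^sub>M (lebesgue \<Otimes>\<^sub>M borel)"
    using a x by measurable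
  from measurable_compose[OF this sigma_meas] show ?thesis by simp
qed

lemma beta_comp_meas:
  assumes t: "th \<in> M \<rightarrow>\<^sub>M lebesgue" and a: "a \<in> M \<rightarrow>\<^sub>M lebesgue"
  shows "(\<lambda>q. beta_fun n G r \<mu> (th q) (a q)) \<in> borel_measurable M"
  unfolding beta_fun_def Xf_def[symmetric]
  by (rule sigma_comp_meas[OF a Xf_meas[OF \<mu>m t a]])

end



locale sett2 = sett G \<mu> r n for G :: "((real^'d) \<times> real) measure" and \<mu> r n +
  fixes F :: "(real^'d) measure"
  assumes PF: "prob_space F" and sF: "sets F = sets lebesgue"
begin

abbreviation "PP \<equiv> PiM {..<n - 1} (\<lambda>_. G)"
abbreviation "MM \<equiv> F \<Otimes>\<^sub>M PP"

lemma PP_prob: "prob_space PP"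
  by (rule prob_space_PiM) (rule P)

lemma MM_prob: "prob_space MM"
  by (rule prob_space_pair[OF PF PP_prob])

lemma fst_meas: "fst \<in> MM \<rightarrow>\<^sub>M lebesgue"
proof -
  have "fst \<in> MM \<rightarrow>\<^sub>M F" by measurable
  then show ?thesis using measurable_cong_sets[OF refl sF] by blast
qed

lemma comp_meas: "i < n - 1 \<Longrightarrow> (\<lambda>z. snd z i) \<in> MM \<rightarrow>\<^sub>M lebesgue"
proof -
  assume i: "i < n - 1"
  have "(\<lambda>z. snd z i) \<in> MM \<rightarrow>\<^sub>M G"
    by (rule measurable_compose[OF measurable_snd measurable_component_singleton]) (use i in auto)
  then show ?thesis using measurable_cong_sets[OF refl sG] by blast
qed

lemma beta_i_meas: "i < n - 1 \<Longrightarrow> (\<lambda>z. beta_fun n G r \<mu> (snd z i) (fst z)) \<in> borel_measurable MM"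
  by (rule beta_comp_meas[OF comp_meas fst_meas])

lemma payoff_meas:
  assumes b: "b \<in> borel_measurable lebesgue" and v: "v \<in> borel_measurable lebesgue"
  shows "payoff n G r \<mu> v b \<in> borel_measurable MM"
proof -
  have [measurable]: "(\<lambda>z. b (fst z)) \<in> borel_measurable MM" by (rule measurable_compose[OF fst_meas b])
  have [measurable]: "(\<lambda>z. v (fst z)) \<in> borel_measurable MM" by (rule measurable_compose[OF fst_meas v])
  have [measurable]: "(\<lambda>z. r (fst z)) \<in> borel_measurable MM" by (rule measurable_compose[OF fst_meas rm])
  have pr: "Measurable.pred MM (\<lambda>z. beta_fun n G r \<mu> (snd z i) (fst z) \<le> b (fst z))" if "i \<in> {..<n - 1}" for i
  proof -
    have [measurable]: "(\<lambda>z. beta_fun n G r \<mu> (snd z i) (fst z)) \<in> borel_measurable MM"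
      using beta_i_meas that by simp
    show ?thesis by measurable
  qed
  have [measurable]: "Measurable.pred MM (\<lambda>z. \<forall>i\<in>{..<n - 1}. beta_fun n G r \<mu> (snd z i) (fst z) \<le> b (fst z))"
    by (rule pred_intros_finite) (use pr in auto)
  have "(\<lambda>z. (v (fst z) - b (fst z)) * (if r (fst z) \<le> b (fst z) \<and> (\<forall>i\<in>{..<n - 1}. beta_fun n G r \<mu> (snd z i) (fst z) \<le> b (fst z)) then 1 else 0)) \<in> borel_measurable MM"
    by measurable
  then show ?thesis unfolding payoff_def Let_def by (simp add: Ball_def lessThan_iff)
qed

end



context sett2 begin

interpretation G: prob_space G by (rule P)

definition Eb :: "real^'d \<Rightarrow> real \<Rightarrow> real" where
  "Eb \<alpha> c0 = (if r \<alpha> \<le> c0 then 1 else 0) * measure G {\<theta>. beta_fun n G r \<mu> \<theta> \<alpha> \<le> c0} ^ (n - 1)"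

lemma Eb_nn: "0 \<le> Eb \<alpha> c0" unfolding Eb_def by simp

lemma setB: "{\<theta>. beta_fun n G r \<mu> \<theta> \<alpha> \<le> c0} \<in> sets G"
proof -
  have "(\<lambda>\<theta>. beta_fun n G r \<mu> \<theta> \<alpha>) \<in> borel_measurable lebesgue"
    by (rule beta_comp_meas) auto
  then have [measurable]: "(\<lambda>\<theta>. beta_fun n G r \<mu> \<theta> \<alpha>) \<in> borel_measurable G"
    using measurable_cong_sets[OF sG refl] by blast
  have "{\<theta> \<in> space G. beta_fun n G r \<mu> \<theta> \<alpha> \<le> c0} \<in> sets G" by measurable
  then show ?thesis by (simp add: spG)
qed

lemma inner:
  "(\<integral>\<^sup>+\<theta>s. ennreal (d * (if r \<alpha> \<le> c0 \<and> (\<forall>i<n - 1. beta_fun n G r \<mu> (\<theta>s i) \<alpha> \<le> c0) then 1 else 0)) \<partial>PP)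
    = ennreal d * ennreal (Eb \<alpha> c0)"
proof -
  define S where "S = {\<theta>. beta_fun n G r \<mu> \<theta> \<alpha> \<le> c0}"
  have S: "S \<in> sets G" unfolding S_def by (rule setB)
  have psf: "product_sigma_finite (\<lambda>_::nat. G)"
    unfolding product_sigma_finite_def using G.sigma_finite_measure_axioms by simp
  show ?thesis
  proof (cases "r \<alpha> \<le> c0")
    case False
    then show ?thesis by (simp add: Eb_def)
  next
    case True
    define E where "E = (\<Pi>\<^sub>E i\<in>{..<n - 1}. S)"
    have spP: "space PP = (\<Pi>\<^sub>E i\<in>{..<n - 1}. UNIV)" by (simp add: space_PiM spG)
    have "(\<integral>\<^sup>+\<theta>s. ennreal (d * (if r \<alpha> \<le> c0 \<and> (\<forall>i<n - 1. beta_fun n G r \<mu> (\<theta>s i) \<alpha> \<le> c0) then 1 else 0)) \<partial>PP)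
        = (\<integral>\<^sup>+\<theta>s. ennreal d * indicator E \<theta>s \<partial>PP)"
      by (rule nn_integral_cong) (auto simp: space_PiM E_def S_def True PiE_iff indicator_def)
    also have "\<dots> = ennreal d * emeasure PP E"
      by (rule nn_integral_cmult_indicator) (simp add: E_def S sets_PiM_I_finite)
    also have "emeasure PP E = (\<Prod>i\<in>{..<n - 1}. emeasure G S)"
      unfolding E_def by (rule product_sigma_finite.emeasure_PiM[OF psf]) (auto simp: S)
    also have "\<dots> = ennreal (measure G S ^ (n - 1))"
      by (simp add: G.emeasure_eq_measure ennreal_power)
    finally show ?thesis using True by (simp add: Eb_def S_def)
  qed
qed

lemma opt_alpha:
  "(v0 - c0) * Eb \<alpha> c0 \<le> (v0 - sigma_fun n G r \<mu> \<alpha> v0) * Eb \<alpha> (sigma_fun n G r \<mu> \<alpha> v0)"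
proof -
  define L where "L = lam G \<mu> \<alpha>"
  define H where "H = Hfun n G \<mu> \<alpha>"
  have Hdef: "H = (\<lambda>x. measure L {..x} ^ (n - 1))"
    unfolding H_def L_def by (rule ext) (simp add: Hfun_def)
  have m: "mono H" unfolding H_def by (rule H_mono)
  have nn: "\<And>x. 0 \<le> H x" unfolding H_def by (rule H_nn)
  have smeas: "sg H (r \<alpha>) \<in> borel_measurable borel"
    by (rule borel_measurable_mono) (auto intro: monoI sg_mono[OF m nn])
  have Qeq: "measure G {\<theta>. beta_fun n G r \<mu> \<theta> \<alpha> \<le> c} = measure L {x. sg H (r \<alpha>) x \<le> c}" for c
  proof -
    have "{x. sg H (r \<alpha>) x \<le> c} \<in> sets borel" using smeas by measurable
    then have "measure L {x. sg H (r \<alpha>) x \<le> c} = measure G ((\<lambda>\<theta>. Xf \<mu> \<theta> \<alpha>) -` {x. sg H (r \<alpha>) x \<le> c} \<inter> space G)"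
      unfolding L_def lam_def Xf_def[symmetric] by (rule measure_distr[OF Xf_meas_alpha])
    then show ?thesis
      by (simp add: beta_fun_def sigma_eq H_def Xf_def spG vimage_def)
  qed
  have "(v0 - c0) * (if r \<alpha> \<le> c0 then 1 else 0) * measure L {x. sg H (r \<alpha>) x \<le> c0} ^ (n - 1)
     \<le> (v0 - sg H (r \<alpha>) v0) * (if r \<alpha> \<le> sg H (r \<alpha>) v0 then 1 else 0) * measure L {x. sg H (r \<alpha>) x \<le> sg H (r \<alpha>) v0} ^ (n - 1)"
    by (rule per_alpha[OF _ _ Hdef]) (auto simp: L_def prob_lam sets_lam)
  then show ?thesis
    by (simp add: Eb_def Qeq sigma_eq H_def mult.assoc)
qed

end



lemma ennreal_mult': "0 \<le> b \<Longrightarrow> ennreal a * ennreal b = ennreal (a * b)"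
  by (cases "0 \<le> a") (auto simp: ennreal_mult ennreal_neg mult_nonpos_nonneg)

lemma ereal_fin:
  fixes X Y Z :: ennreal
  assumes "X < \<top>" "Z < \<top>" "X \<le> Z + Y"
  shows "enn2ereal X - enn2ereal Y \<le> enn2ereal Z"
proof (cases "Y = \<top>")
  case True
  obtain x where "X = ennreal x" "0 \<le> x" using assms(1) by (cases X) auto
  then show ?thesis using True by simp
next
  case False
  obtain x where x: "X = ennreal x" "0 \<le> x" using assms(1) by (cases X) auto
  obtain y where y: "Y = ennreal y" "0 \<le> y" using False by (cases Y) auto
  obtain z where z: "Z = ennreal z" "0 \<le> z" using assms(2) by (cases Z) auto
  have "x \<le> z + y" using assms(3) x y z by (simp flip: ennreal_plus)
  then show ?thesis using x y z by simp
qed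

context sett2 begin

interpretation PPp: prob_space PP by (rule PP_prob)

lemma main_ineq:
  assumes b: "b \<in> borel_measurable lebesgue" and v: "v \<in> borel_measurable lebesgue"
    and bs: "bs = (\<lambda>\<alpha>. sigma_fun n G r \<mu> \<alpha> (v \<alpha>))"
    and Afin: "(\<integral>\<^sup>+ z. ennreal (payoff n G r \<mu> v b z) \<partial>MM) < \<top>"
    and Sfin: "(\<integral>\<^sup>+ z. ennreal (payoff n G r \<mu> v bs z) \<partial>MM) < \<top>"
  shows "ext_expect MM (payoff n G r \<mu> v b) \<le> enn2ereal (\<integral>\<^sup>+ z. ennreal (payoff n G r \<mu> v bs z) \<partial>MM)"
proof -
  have bsm: "bs \<in> borel_measurable lebesgue" unfolding bs
    by (rule sigma_comp_meas[OF _ v]) auto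
  note pbm = payoff_meas[OF b v] and psm = payoff_meas[OF bsm v]
  have fub: "(\<integral>\<^sup>+ z. f z \<partial>MM) = (\<integral>\<^sup>+ \<alpha>. \<integral>\<^sup>+ \<theta>s. f (\<alpha>, \<theta>s) \<partial>PP \<partial>F)"
    if "f \<in> borel_measurable MM" for f
    using PPp.nn_integral_fst[OF that] by simp
  have mi: "(\<lambda>\<alpha>. \<integral>\<^sup>+ \<theta>s. f (\<alpha>, \<theta>s) \<partial>PP) \<in> borel_measurable F"
    if "f \<in> borel_measurable MM" for f
    by (rule PPp.borel_measurable_nn_integral_fst[OF that])
  have m1: "(\<lambda>z. ennreal (payoff n G r \<mu> v b z)) \<in> borel_measurable MM" using pbm by measurable
  have m2: "(\<lambda>z. ennreal (- payoff n G r \<mu> v b z)) \<in> borel_measurable MM" using pbm by measurable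
  have m3: "(\<lambda>z. ennreal (payoff n G r \<mu> v bs z)) \<in> borel_measurable MM" using psm by measurable
  have ptw: "(\<integral>\<^sup>+ \<theta>s. ennreal (payoff n G r \<mu> v b (\<alpha>, \<theta>s)) \<partial>PP)
      \<le> (\<integral>\<^sup>+ \<theta>s. ennreal (payoff n G r \<mu> v bs (\<alpha>, \<theta>s)) \<partial>PP) + (\<integral>\<^sup>+ \<theta>s. ennreal (- payoff n G r \<mu> v b (\<alpha>, \<theta>s)) \<partial>PP)"
    for \<alpha>
  proof -
    have e1: "(\<integral>\<^sup>+ \<theta>s. ennreal (payoff n G r \<mu> v b (\<alpha>, \<theta>s)) \<partial>PP) = ennreal ((v \<alpha> - b \<alpha>) * Eb \<alpha> (b \<alpha>))"
      unfolding payoff_def Let_def fst_conv snd_conv inner by (simp add: ennreal_mult' Eb_nn)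
    have e2: "(\<integral>\<^sup>+ \<theta>s. ennreal (- payoff n G r \<mu> v b (\<alpha>, \<theta>s)) \<partial>PP) = ennreal ((b \<alpha> - v \<alpha>) * Eb \<alpha> (b \<alpha>))"
    proof -
      have "(\<integral>\<^sup>+ \<theta>s. ennreal (- payoff n G r \<mu> v b (\<alpha>, \<theta>s)) \<partial>PP)
        = (\<integral>\<^sup>+\<theta>s. ennreal ((b \<alpha> - v \<alpha>) * (if r \<alpha> \<le> b \<alpha> \<and> (\<forall>i<n - 1. beta_fun n G r \<mu> (\<theta>s i) \<alpha> \<le> b \<alpha>) then 1 else 0)) \<partial>PP)"
        unfolding payoff_def Let_def fst_conv snd_conv by (simp add: algebra_simps)
      then show ?thesis unfolding inner by (simp add: ennreal_mult' Eb_nn)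
    qed
    have e3: "(\<integral>\<^sup>+ \<theta>s. ennreal (payoff n G r \<mu> v bs (\<alpha>, \<theta>s)) \<partial>PP) = ennreal ((v \<alpha> - bs \<alpha>) * Eb \<alpha> (bs \<alpha>))"
      unfolding payoff_def Let_def fst_conv snd_conv inner by (simp add: ennreal_mult' Eb_nn)
    have "ennreal ((v \<alpha> - b \<alpha>) * Eb \<alpha> (b \<alpha>)) \<le> ennreal ((v \<alpha> - bs \<alpha>) * Eb \<alpha> (bs \<alpha>))"
      using opt_alpha[of "v \<alpha>" "b \<alpha>" \<alpha>] unfolding bs by (intro ennreal_leI) simp
    then show ?thesis unfolding e1 e2 e3 by (simp add: add_increasing2)
  qed
  have "(\<integral>\<^sup>+ z. ennreal (payoff n G r \<mu> v b z) \<partial>MM)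
      \<le> (\<integral>\<^sup>+ z. ennreal (payoff n G r \<mu> v bs z) \<partial>MM) + (\<integral>\<^sup>+ z. ennreal (- payoff n G r \<mu> v b z) \<partial>MM)"
  proof -
    have "(\<integral>\<^sup>+ z. ennreal (payoff n G r \<mu> v b z) \<partial>MM)
        \<le> (\<integral>\<^sup>+ \<alpha>. (\<integral>\<^sup>+ \<theta>s. ennreal (payoff n G r \<mu> v bs (\<alpha>, \<theta>s)) \<partial>PP) + (\<integral>\<^sup>+ \<theta>s. ennreal (- payoff n G r \<mu> v b (\<alpha>, \<theta>s)) \<partial>PP) \<partial>F)"
      unfolding fub[OF m1] by (rule nn_integral_mono) (rule ptw)
    also have "\<dots> = (\<integral>\<^sup>+ \<alpha>. (\<integral>\<^sup>+ \<theta>s. ennreal (payoff n G r \<mu> v bs (\<alpha>, \<theta>s)) \<partial>PP) \<partial>F)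
        + (\<integral>\<^sup>+ \<alpha>. (\<integral>\<^sup>+ \<theta>s. ennreal (- payoff n G r \<mu> v b (\<alpha>, \<theta>s)) \<partial>PP) \<partial>F)"
      by (rule nn_integral_add) (use mi[OF m3] mi[OF m2] in auto)
    finally show ?thesis unfolding fub[OF m2] fub[OF m3] .
  qed
  then show ?thesis unfolding ext_expect_def
    by (rule ereal_fin[OF Afin Sfin])
qed

end



lemma inner_pos:
  fixes w a :: "real^'d"
  assumes "\<forall>i. 0 < w $ i" "\<forall>i. 0 < a $ i"
  shows "0 < w \<bullet> a"
  unfolding inner_vec_def using assms by (intro sum_pos) auto

lemma fin_bound:
  assumes "prob_space M" "AE z in M. ennreal (h z) \<le> ennreal c"
  shows "(\<integral>\<^sup>+ z. ennreal (h z) \<partial>M) < \<top>"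
proof -
  have "(\<integral>\<^sup>+ z. ennreal (h z) \<partial>M) \<le> (\<integral>\<^sup>+ z. ennreal c \<partial>M)"
    by (rule nn_integral_mono_AE[OF assms(2)])
  also have "\<dots> = ennreal c" using prob_space.emeasure_space_1[OF assms(1)] by simp
  finally show ?thesis using order.strict_trans1 by fastforce
qed

lemma enn2ereal_fin: "S < \<top> \<Longrightarrow> ereal (enn2real S) = enn2ereal S"
  by (cases S) auto

theorem lemma2:
  fixes n :: nat and U Bmin \<omega> t :: real
    and A :: "(real^'d) set"
    and f :: "real^'d \<Rightarrow> real" and F :: "(real^'d) measure"
    and g :: "(real^'d) \<times> real \<Rightarrow> real" and G :: "((real^'d) \<times> real) measure"
    and r :: "real^'d \<Rightarrow> real"
    and \<mu> :: "(real^'d) \<times> real \<Rightarrow> real"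
    and w :: "real^'d" and B :: real
  assumes n: "n \<ge> 2" and d: "CARD('d) \<ge> 2"
    and U: "U > 0" and Bmin: "Bmin > 0"
    and A_pos: "A \<subseteq> {\<alpha>. \<forall>i. 0 < \<alpha> $ i}" and A_meas: "A \<in> sets lebesgue"
    and f_meas: "f \<in> borel_measurable lebesgue" and f_nonneg: "\<And>\<alpha>. f \<alpha> \<ge> 0"
    and f_A: "\<And>\<alpha>. \<alpha> \<notin> A \<Longrightarrow> f \<alpha> = 0"
    and F_def: "F = density lebesgue (\<lambda>\<alpha>. ennreal (f \<alpha>))" and F_prob: "prob_space F"
    and g_meas: "g \<in> borel_measurable lebesgue" and g_nonneg: "\<And>\<theta>. g \<theta> \<ge> 0"
    and g_Theta: "\<And>\<theta>. \<theta> \<notin> Theta U Bmin \<Longrightarrow> g \<theta> = 0"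
    and G_def: "G = density lebesgue (\<lambda>\<theta>. ennreal (g \<theta>))" and G_prob: "prob_space G"
    and \<omega>: "\<omega> > 0" "\<And>w' \<alpha>. w' \<in> Theta_w U \<Longrightarrow> \<alpha> \<in> A \<Longrightarrow> w' \<bullet> \<alpha> \<le> \<omega>"
    and r_meas: "r \<in> borel_measurable lebesgue" and r_pos: "\<And>\<alpha>. \<alpha> \<in> A \<Longrightarrow> r \<alpha> > 0"
    and \<mu>_meas: "\<mu> \<in> borel_measurable lebesgue"
    and \<mu>_nonneg: "\<And>\<theta>. \<theta> \<in> Theta U Bmin \<Longrightarrow> \<mu> \<theta> \<ge> 0"
    and wB: "(w, B) \<in> Theta U Bmin" and t: "t \<ge> 0"
  shows
    "let M = F \<Otimes>\<^sub>M PiM {..<n - 1} (\<lambda>_. G);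
         v = (\<lambda>\<alpha>. (w \<bullet> \<alpha>) / (1 + t));
         bstar = (\<lambda>\<alpha>. sigma_fun n G r \<mu> \<alpha> (v \<alpha>))
     in bstar \<in> borel_measurable lebesgue \<and> (\<forall>\<alpha>\<in>A. bstar \<alpha> \<ge> 0)
        \<and> integrable M (payoff n G r \<mu> v bstar)
        \<and> (\<forall>b. b \<in> borel_measurable lebesgue \<longrightarrow> (\<forall>\<alpha>\<in>A. b \<alpha> \<ge> 0) \<longrightarrow>
              ext_expect M (payoff n G r \<mu> v b) \<le> ereal (\<integral>z. payoff n G r \<mu> v bstar z \<partial>M))"
proof -
  have sG: "sets G = sets lebesgue" unfolding G_def by simp
  have sF: "sets F = sets lebesgue" unfolding F_def by simp
  interpret S: sett2 G \<mu> r n F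
    by (intro sett2.intro sett.intro sett2_axioms.intro G_prob sG \<mu>_meas r_meas F_prob sF)
  define M where "M = F \<Otimes>\<^sub>M PiM {..<n - 1} (\<lambda>_. G)"
  define v where "v = (\<lambda>\<alpha>::real^'d. (w \<bullet> \<alpha>) / (1 + t))"
  define bs where "bs = (\<lambda>\<alpha>. sigma_fun n G r \<mu> \<alpha> (v \<alpha>))"
  have Mprob: "prob_space M" unfolding M_def by (rule S.MM_prob)
  have vm: "v \<in> borel_measurable lebesgue"
  proof -
    have "v \<in> borel_measurable borel" unfolding v_def by measurable
    from measurable_compose[OF idm this] show ?thesis by simp
  qed
  have bsm: "bs \<in> borel_measurable lebesgue" unfolding bs_def
    by (rule S.sigma_comp_meas[OF _ vm]) auto
  have wpos: "\<forall>i. 0 < w $ i" and wTw: "w \<in> Theta_w U"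
    using wB by (auto simp: Theta_def Theta_w_def)
  have vpos: "0 < v \<alpha>" and vle: "v \<alpha> \<le> \<omega>" if "\<alpha> \<in> A" for \<alpha>
  proof -
    have ip: "0 < w \<bullet> \<alpha>" using inner_pos[OF wpos] that A_pos by auto
    then show "0 < v \<alpha>" unfolding v_def using t by simp
    have "v \<alpha> \<le> w \<bullet> \<alpha>" unfolding v_def using ip t by (simp add: divide_le_eq)
    then show "v \<alpha> \<le> \<omega>" using \<omega>(2)[OF wTw that] by simp
  qed
  have sgge: "r \<alpha> \<le> sigma_fun n G r \<mu> \<alpha> x" "sigma_fun n G r \<mu> \<alpha> x \<le> x" if "r \<alpha> \<le> x" for \<alpha> x
    unfolding S.sigma_eq using sg_ge[OF S.H_mono S.H_nn that] by auto
  have sglt: "sigma_fun n G r \<mu> \<alpha> x = x" if "x < r \<alpha>" for \<alpha> x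
    unfolding S.sigma_eq using that by (simp add: sg_def)
  have bsnn: "\<forall>\<alpha>\<in>A. bs \<alpha> \<ge> 0"
  proof
    fix \<alpha> assume a: "\<alpha> \<in> A"
    show "bs \<alpha> \<ge> 0"
    proof (cases "v \<alpha> < r \<alpha>")
      case True then show ?thesis using vpos[OF a] sglt by (simp add: bs_def)
    next
      case False then show ?thesis using sgge(1)[of \<alpha> "v \<alpha>"] r_pos[OF a] by (simp add: bs_def)
    qed
  qed
  have AEA: "AE z in M. fst z \<in> A"
  proof -
    interpret PS: pair_sigma_finite F "PiM {..<n - 1} (\<lambda>_. G)"
      by (intro pair_sigma_finite.intro prob_space_imp_sigma_finite F_prob S.PP_prob)
    have fm: "(\<lambda>\<alpha>. ennreal (f \<alpha>)) \<in> borel_measurable lebesgue" using f_meas by measurable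
    have "AE \<alpha> in F. \<alpha> \<in> A" unfolding F_def AE_density[OF fm]
      by (rule AE_I2) (use f_A in force)
    then have "AE \<alpha> in F. AE \<theta>s in PiM {..<n - 1} (\<lambda>_. G). fst (\<alpha>, \<theta>s) \<in> A"
      by eventually_elim simp
    moreover have "{z \<in> space M. fst z \<in> A} \<in> sets M"
    proof -
      have [measurable]: "A \<in> sets F" using A_meas sF by simp
      show ?thesis unfolding M_def by measurable
    qed
    ultimately show ?thesis unfolding M_def by (intro PS.AE_pair_measure) (auto simp: M_def)
  qed
  have psnn: "0 \<le> payoff n G r \<mu> v bs z" for z
  proof -
    obtain \<alpha> \<theta>s where z: "z = (\<alpha>, \<theta>s)" by (cases z)
    show ?thesis
    proof (cases "r \<alpha> \<le> bs \<alpha>")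
      case True
      then have "r \<alpha> \<le> v \<alpha>" using sglt[of "v \<alpha>" \<alpha>] unfolding bs_def by (cases "v \<alpha> < r \<alpha>") auto
      then have "bs \<alpha> \<le> v \<alpha>" using sgge(2) unfolding bs_def by auto
      then show ?thesis by (simp add: payoff_def z)
    qed (simp add: payoff_def z)
  qed
  have psle: "payoff n G r \<mu> v bs z \<le> \<omega>" if "fst z \<in> A" for z
  proof -
    obtain \<alpha> \<theta>s where z: "z = (\<alpha>, \<theta>s)" by (cases z)
    have a: "\<alpha> \<in> A" using that z by simp
    have "bs \<alpha> \<ge> 0" using bsnn a by auto
    then show ?thesis using vle[OF a] \<omega>(1) by (simp add: payoff_def z)
  qed
  have psm: "payoff n G r \<mu> v bs \<in> borel_measurable M"
    unfolding M_def by (rule S.payoff_meas[OF bsm vm])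
  have psint: "integrable M (payoff n G r \<mu> v bs)"
  proof (rule finite_measure.integrable_const_bound[where B=\<omega>])
    show "finite_measure M" using Mprob by (simp add: prob_space_def)
    show "AE x in M. norm (payoff n G r \<mu> v bs x) \<le> \<omega>"
      using AEA by eventually_elim (use psnn psle in auto)
  qed (rule psm)
  have Sfin: "(\<integral>\<^sup>+ z. ennreal (payoff n G r \<mu> v bs z) \<partial>M) < \<top>"
    by (rule fin_bound[OF Mprob, of _ \<omega>]) (use AEA in \<open>eventually_elim, use psle in \<open>auto intro: ennreal_leI\<close>\<close>)
  have int_eq: "ereal (\<integral>z. payoff n G r \<mu> v bs z \<partial>M) = enn2ereal (\<integral>\<^sup>+ z. ennreal (payoff n G r \<mu> v bs z) \<partial>M)"
    using integral_eq_nn_integral[OF psm] psnn enn2ereal_fin[OF Sfin] by simp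
  have main: "ext_expect M (payoff n G r \<mu> v b) \<le> ereal (\<integral>z. payoff n G r \<mu> v bs z \<partial>M)"
    if b: "b \<in> borel_measurable lebesgue" and bnn: "\<forall>\<alpha>\<in>A. b \<alpha> \<ge> 0" for b
  proof -
    have pble: "payoff n G r \<mu> v b z \<le> \<omega>" if "fst z \<in> A" for z
    proof -
      obtain \<alpha> \<theta>s where z: "z = (\<alpha>, \<theta>s)" by (cases z)
      have a: "\<alpha> \<in> A" using that z by simp
      have "b \<alpha> \<ge> 0" using bnn a by auto
      then show ?thesis using vle[OF a] \<omega>(1) by (simp add: payoff_def z)
    qed
    have Afin: "(\<integral>\<^sup>+ z. ennreal (payoff n G r \<mu> v b z) \<partial>M) < \<top>"
      by (rule fin_bound[OF Mprob, of _ \<omega>]) (use AEA in \<open>eventually_elim, use pble in \<open>auto intro: ennreal_leI\<close>\<close>)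
    have "ext_expect M (payoff n G r \<mu> v b) \<le> enn2ereal (\<integral>\<^sup>+ z. ennreal (payoff n G r \<mu> v bs z) \<partial>M)"
      unfolding M_def by (rule S.main_ineq[OF b vm bs_def]) (use Afin Sfin in \<open>auto simp: M_def\<close>)
    then show ?thesis using int_eq by simp
  qed
  have all: "bs \<in> borel_measurable lebesgue \<and> (\<forall>\<alpha>\<in>A. bs \<alpha> \<ge> 0)
        \<and> integrable M (payoff n G r \<mu> v bs)
        \<and> (\<forall>b. b \<in> borel_measurable lebesgue \<longrightarrow> (\<forall>\<alpha>\<in>A. b \<alpha> \<ge> 0) \<longrightarrow>
              ext_expect M (payoff n G r \<mu> v b) \<le> ereal (\<integral>z. payoff n G r \<mu> v bs z \<partial>M))"
    using bsm bsnn psint main by (intro conjI allI impI) auto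
  show ?thesis
    unfolding Let_def using all unfolding M_def v_def bs_def .
qed



end
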